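(* Let $\ell\ge1$ and $D\ge0$, let $d$ be a distortion function on $\mathcal{X}^\ell\times\hat{\mathcal{X}}^\ell$, and let $Q:\mathcal{X}^\ell\to\hat{\mathcal{X}}^\ell$ satisfy $d(x^\ell,Q(x^\ell))\le\ell D$ for all $x^\ell$. Let $(f,g)$ be an IL FS encoder with $s$ states over the input alphabet $\hat{\mathcal{X}}^\ell$ (each $\ell$-block $\hat x^\ell$ being one input symbol), with output function $f:\mathcal{Z}\times\hat{\mathcal{X}}^\ell\to\mathcal{Y}$ and next-state function $g:\mathcal{Z}\times\hat{\mathcal{X}}^\ell\to\mathcal{Z}$. Define the $s\times s$ matrices $$K_{zz'}=\sum_{\{x^\ell\in\mathcal{X}^\ell:\ g(z,Q(x^\ell))=z'\}}2^{-L[f(z,Q(x^\ell))]},\qquad \hat K_{zz'}=\sum_{\{\hat x^\ell\in\hat{\mathcal{X}}^\ell:\ g(z,\hat x^\ell)=z'\}}2^{-L[f(z,\hat x^\ell)]}.$$ Let $\mathcal{B}(\hat x^\ell)=\{x^\ell\in\mathcal{X}^\ell: d(x^\ell,\hat x^\ell)\le\ell D\}$ and $B_\ell=\max_{\hat x^\ell\in\hat{\mathcal{X}}^\ell}|\mathcal{B}(\hat x^\ell)|$. Then $K\le B_\ell\hat K$ entrywise, and $\rho(K)\le B_\ell$.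
   Context: An FS encoder over a finite input alphabet $\mathcal{A}$ consists of a finite set $\mathcal{Z}$ of $s$ states, a finite set $\mathcal{Y}$ of binary strings (possibly including the empty string), an output function $f:\mathcal{Z}\times\mathcal{A}\to\mathcal{Y}$ and a next-state function $g:\mathcal{Z}\times\mathcal{A}\to\mathcal{Z}$; for $z\in\mathcal{Z}$ and $a^n\in\mathcal{A}^n$, with $z_1=z$, $z_{i+1}=g(z_i,a_i)$, $g(z,a^n)=z_{n+1}$ and $f(z,a^n)$ is the concatenated binary string $f(z_1,a_1)\cdots f(z_n,a_n)$ with length $L[f(z,a^n)]=\sum_i L[f(z_i,a_i)]$. It is information lossless (IL) if for every $z$ and $n$ the map $a^n\mapsto(f(z,a^n),g(z,a^n))$ is injective on $\mathcal{A}^n$. $\rho(\cdot)$ denotes spectral radius. *)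

theory Defs
  imports "HOL-Analysis.Analysis" "Jordan_Normal_Form.Spectral_Radius"
begin

fun fs_out :: "(nat \<Rightarrow> 'a \<Rightarrow> bool list) \<Rightarrow> (nat \<Rightarrow> 'a \<Rightarrow> nat) \<Rightarrow> nat \<Rightarrow> 'a list \<Rightarrow> bool list" where
  "fs_out f g z [] = []"
| "fs_out f g z (a # as) = f z a @ fs_out f g (g z a) as"

fun fs_state :: "(nat \<Rightarrow> 'a \<Rightarrow> nat) \<Rightarrow> nat \<Rightarrow> 'a list \<Rightarrow> nat" where
  "fs_state g z [] = z"
| "fs_state g z (a # as) = fs_state g (g z a) as"

definition fs_encoder :: "nat \<Rightarrow> 'a set \<Rightarrow> (nat \<Rightarrow> 'a \<Rightarrow> bool list) \<Rightarrow> (nat \<Rightarrow> 'a \<Rightarrow> nat) \<Rightarrow> bool" where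
  "fs_encoder s A f g \<longleftrightarrow> s \<ge> 1 \<and> finite A \<and> (\<forall>z<s. \<forall>a\<in>A. g z a < s)"

definition IL :: "nat \<Rightarrow> 'a set \<Rightarrow> (nat \<Rightarrow> 'a \<Rightarrow> bool list) \<Rightarrow> (nat \<Rightarrow> 'a \<Rightarrow> nat) \<Rightarrow> bool" where
  "IL s A f g \<longleftrightarrow> (\<forall>z<s. \<forall>n. inj_on (\<lambda>as. (fs_out f g z as, fs_state g z as))
                                   {as. length as = n \<and> set as \<subseteq> A})"

definition blocks :: "nat \<Rightarrow> 'a list set" where
  "blocks l = {xs. length xs = l}"

definition Kmat_entry :: "nat \<Rightarrow> ('x list \<Rightarrow> 'y list) \<Rightarrow> (nat \<Rightarrow> 'y list \<Rightarrow> bool list) \<Rightarrow> (nat \<Rightarrow> 'y list \<Rightarrow> nat) \<Rightarrow> nat \<Rightarrow> nat \<Rightarrow> real" where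
  "Kmat_entry l Q f g z z' = (\<Sum>x\<in>{x\<in>blocks l. g z (Q x) = z'}. 2 powr (- real (length (f z (Q x)))))"

definition Khat_entry :: "nat \<Rightarrow> (nat \<Rightarrow> 'y list \<Rightarrow> bool list) \<Rightarrow> (nat \<Rightarrow> 'y list \<Rightarrow> nat) \<Rightarrow> nat \<Rightarrow> nat \<Rightarrow> real" where
  "Khat_entry l f g z z' = (\<Sum>xh\<in>{xh\<in>blocks l. g z xh = z'}. 2 powr (- real (length (f z xh))))"

(* the s x s matrix K, as a complex matrix so that spectral_radius applies *)
definition K_matrix :: "nat \<Rightarrow> nat \<Rightarrow> ('x list \<Rightarrow> 'y list) \<Rightarrow> (nat \<Rightarrow> 'y list \<Rightarrow> bool list) \<Rightarrow> (nat \<Rightarrow> 'y list \<Rightarrow> nat) \<Rightarrow> complex mat" where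
  "K_matrix s l Q f g = mat s s (\<lambda>(z, z'). complex_of_real (Kmat_entry l Q f g z z'))"

definition dball :: "nat \<Rightarrow> ('x list \<Rightarrow> 'y list \<Rightarrow> real) \<Rightarrow> real \<Rightarrow> 'y list \<Rightarrow> 'x list set" where
  "dball l d D xh = {x\<in>blocks l. d x xh \<le> real l * D}"

definition B_l :: "nat \<Rightarrow> ('x::finite list \<Rightarrow> 'y::finite list \<Rightarrow> real) \<Rightarrow> real \<Rightarrow> nat" where
  "B_l l d D = Max ((\<lambda>xh. card (dball l d D xh)) ` (blocks l :: 'y list set))"

end

theory Submission
  imports Defs
begin

lemma growth_contra:
  fixes r a b :: real
  assumes r: "r > 1" and a: "a \<ge> 0" and b: "b \<ge> 0"
  shows "\<exists>n. a * real n + b < r ^ n"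
proof -
  have l1: "(\<lambda>n. real n / r ^ n) \<longlonglongrightarrow> 0" using lim_n_over_pown[of r] r by simp
  have l2: "(\<lambda>n. 1 / r ^ n) \<longlonglongrightarrow> 0"
    using LIMSEQ_inverse_realpow_zero[of r] r by (simp add: divide_inverse)
  have "(\<lambda>n. a * (real n / r ^ n) + b * (1 / r ^ n)) \<longlonglongrightarrow> a * 0 + b * 0"
    by (intro tendsto_intros l1 l2)
  hence "eventually (\<lambda>n. a * (real n / r ^ n) + b * (1 / r ^ n) < 1) sequentially"
    by (rule order_tendstoD) simp
  then obtain N where N: "\<forall>n\<ge>N. a * (real n / r ^ n) + b * (1 / r ^ n) < 1"
    unfolding eventually_sequentially by blast
  define n where "n = N"
  have n: "a * (real n / r ^ n) + b * (1 / r ^ n) < 1" using N n_def by simp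
  have rp: "r ^ n > 0" using r by simp
  have "a * real n + b = (a * (real n / r ^ n) + b * (1 / r ^ n)) * r ^ n"
    using rp r by (simp add: field_simps)
  also have "\<dots> < 1 * r ^ n" using n rp by (intro mult_strict_right_mono) auto
  finally show ?thesis by auto
qed

lemma fiber_sum_le:
  fixes h :: "'b \<Rightarrow> real"
  assumes fA: "finite A" and fC: "finite C" and sub: "Q ` A \<subseteq> C"
    and card: "\<And>y. y \<in> C \<Longrightarrow> card {x\<in>A. Q x = y} \<le> bnd y"
    and nn: "\<And>y. y \<in> C \<Longrightarrow> h y \<ge> 0"
  shows "(\<Sum>x\<in>A. h (Q x)) \<le> (\<Sum>y\<in>C. real (bnd y) * h y)"
proof -
  have "(\<Sum>x\<in>A. h (Q x)) = (\<Sum>y\<in>C. \<Sum>x\<in>{x\<in>A. Q x = y}. h (Q x))"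
    using sum.group[OF fA fC sub, of "\<lambda>x. h (Q x)"] by simp
  also have "\<dots> = (\<Sum>y\<in>C. real (card {x\<in>A. Q x = y}) * h y)"
    by (intro sum.cong refl) auto
  also have "\<dots> \<le> (\<Sum>y\<in>C. real (bnd y) * h y)"
    using card nn by (intro sum_mono mult_right_mono) auto
  finally show ?thesis .
qed


definition words :: "nat \<Rightarrow> nat \<Rightarrow> 'y list list set" where
  "words l n = {ws. length ws = n \<and> set ws \<subseteq> blocks l}"

definition Wsum :: "nat \<Rightarrow> (nat \<Rightarrow> 'y list \<Rightarrow> bool list) \<Rightarrow> (nat \<Rightarrow> 'y list \<Rightarrow> nat) \<Rightarrow> nat \<Rightarrow> nat \<Rightarrow> real" where
  "Wsum l f g n z = (\<Sum>ws\<in>words l n. 2 powr - real (length (fs_out f g z ws)))"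

lemma finite_blocks: "finite (blocks l :: 'y::finite list set)"
proof -
  have "blocks l = {xs :: 'y list. set xs \<subseteq> UNIV \<and> length xs = l}" by (auto simp: blocks_def)
  thus ?thesis using finite_lists_length_eq[of "UNIV :: 'y set" l] by simp
qed

lemma finite_words: "finite (words l n :: 'y::finite list list set)"
proof -
  have "(words l n :: 'y list list set) = {xs. set xs \<subseteq> blocks l \<and> length xs = n}" by (auto simp: words_def)
  thus ?thesis using finite_lists_length_eq[OF finite_blocks, of l n] by simp
qed

lemma words_Suc: "words l (Suc n) = (\<lambda>(a, ws). a # ws) ` (blocks l \<times> words l n)"
  unfolding words_def
  by (auto simp: length_Suc_conv image_iff)

lemma Wsum_Suc:
  "Wsum l f g (Suc n) z = (\<Sum>a\<in>blocks l. 2 powr - real (length (f z a)) * Wsum l f g n (g z a))"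
proof -
  have inj: "inj_on (\<lambda>(a, ws). a # ws) (blocks l \<times> words l n)" by (auto simp: inj_on_def)
  have "Wsum l f g (Suc n) z = (\<Sum>p\<in>blocks l \<times> words l n. 2 powr - real (length (fs_out f g z ((\<lambda>(a, ws). a # ws) p))))"
    unfolding Wsum_def words_Suc by (rule sum.reindex[OF inj, unfolded comp_def])
  also have "\<dots> = (\<Sum>a\<in>blocks l. \<Sum>ws\<in>words l n. 2 powr - real (length (fs_out f g z (a # ws))))"
    by (subst sum.cartesian_product) (simp add: case_prod_beta)
  also have "\<dots> = (\<Sum>a\<in>blocks l. 2 powr - real (length (f z a)) * Wsum l f g n (g z a))"
    unfolding Wsum_def sum_distrib_left
    by (intro sum.cong refl) (simp add: powr_add[symmetric])
  finally show ?thesis .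
qed

lemma Wsum_nonneg: "Wsum l f g n z \<ge> 0"
  unfolding Wsum_def by (intro sum_nonneg) auto

lemma fs_state_lt:
  assumes "\<forall>z<s. \<forall>a\<in>A. g z a < s" "z < s" "set ws \<subseteq> A"
  shows "fs_state g z ws < s"
  using assms(2,3) by (induction ws arbitrary: z) (use assms(1) in auto)

lemma fs_out_len:
  assumes "\<forall>z<s. \<forall>a\<in>A. g z a < s" "\<forall>z<s. \<forall>a\<in>A. length (f z a) \<le> c" "z < s" "set ws \<subseteq> A"
  shows "length (fs_out f g z ws) \<le> c * length ws"
  using assms(3,4)
proof (induction ws arbitrary: z)
  case Nil then show ?case by simp
next
  case (Cons a ws)
  have "length (f z a) \<le> c" using assms(2) Cons.prems by auto
  moreover have "length (fs_out f g (g z a) ws) \<le> c * length ws"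
    using Cons assms(1) by auto
  ultimately show ?case by simp
qed

lemma kraft:
  fixes f :: "nat \<Rightarrow> 'y::finite list \<Rightarrow> bool list"
  assumes enc: "fs_encoder s (blocks l) f g" and il: "IL s (blocks l) f g"
    and c: "\<forall>z<s. \<forall>a\<in>blocks l. length (f z a) \<le> c" and z: "z < s"
  shows "Wsum l f g n z \<le> real s * (real c * real n + 1)"
proof -
  have gs: "\<forall>z<s. \<forall>a\<in>blocks l. g z a < s" using enc by (simp add: fs_encoder_def)
  let ?L = "\<lambda>ws. length (fs_out f g z ws)"
  have inj: "inj_on (\<lambda>ws. (fs_out f g z ws, fs_state g z ws)) (words l n)"
    using il z unfolding IL_def words_def by blast
  have "Wsum l f g n z = (\<Sum>ws\<in>words l n. (\<lambda>k. 2 powr - real k) (?L ws))"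
    unfolding Wsum_def by simp
  also have "\<dots> \<le> (\<Sum>k\<in>{..c*n}. real (s * 2 ^ k) * 2 powr - real k)"
  proof (rule fiber_sum_le[OF finite_words])
    show "?L ` words l n \<subseteq> {..c*n}"
      using fs_out_len[OF gs c z] by (auto simp: words_def mult.commute)
  next
    fix k assume "k \<in> {..c*n}"
    let ?S = "{ws \<in> words l n. ?L ws = k}"
    have "(\<lambda>ws. (fs_out f g z ws, fs_state g z ws)) ` ?S \<subseteq> {bs. set bs \<subseteq> UNIV \<and> length bs = k} \<times> {..<s}"
      using fs_state_lt[OF gs z] by (auto simp: words_def)
    moreover have "inj_on (\<lambda>ws. (fs_out f g z ws, fs_state g z ws)) ?S"
      by (rule inj_on_subset[OF inj]) auto
    moreover have fb: "finite {bs::bool list. length bs = k}"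
      using finite_lists_length_eq[of "UNIV::bool set" k] by simp
    ultimately have "card ?S \<le> card ({bs :: bool list. set bs \<subseteq> UNIV \<and> length bs = k} \<times> {..<s})"
      by (intro card_inj_on_le) (auto intro!: finite_cartesian_product)
    also have "\<dots> = s * 2 ^ k"
      using card_lists_length_eq[of "UNIV::bool set" k] by (simp add: card_cartesian_product)
    finally show "card ?S \<le> s * 2 ^ k" .
  qed auto
  also have "\<dots> = (\<Sum>k\<in>{..c*n}. real s)"
    by (intro sum.cong refl) (simp add: powr_realpow[symmetric] powr_add[symmetric])
  also have "\<dots> = real s * (real c * real n + 1)" by simp
  finally show ?thesis .
qed


fun Useq :: "nat \<Rightarrow> ('x list \<Rightarrow> 'y list) \<Rightarrow> (nat \<Rightarrow> 'y list \<Rightarrow> bool list) \<Rightarrow> (nat \<Rightarrow> 'y list \<Rightarrow> nat) \<Rightarrow> nat \<Rightarrow> nat \<Rightarrow> real" where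
  "Useq l Q f g 0 z = 1"
| "Useq l Q f g (Suc n) z = (\<Sum>x\<in>blocks l. 2 powr - real (length (f z (Q x))) * Useq l Q f g n (g z (Q x)))"

fun Tseq :: "nat \<Rightarrow> ('x list \<Rightarrow> 'y list) \<Rightarrow> (nat \<Rightarrow> 'y list \<Rightarrow> bool list) \<Rightarrow> (nat \<Rightarrow> 'y list \<Rightarrow> nat) \<Rightarrow> complex vec \<Rightarrow> nat \<Rightarrow> nat \<Rightarrow> complex" where
  "Tseq l Q f g v 0 z = v $ z"
| "Tseq l Q f g v (Suc n) z = (\<Sum>x\<in>blocks l. complex_of_real (2 powr - real (length (f z (Q x)))) * Tseq l Q f g v n (g z (Q x)))"

lemma Useq_nonneg: "Useq l Q f g n z \<ge> 0"
  by (induction n arbitrary: z) (auto intro!: sum_nonneg)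

lemma fiber_card_B:
  fixes d :: "'x::finite list \<Rightarrow> 'y::finite list \<Rightarrow> real"
  assumes dQ: "\<forall>x\<in>blocks l. d x (Q x) \<le> real l * D" and y: "y \<in> blocks l"
    and A: "A \<subseteq> blocks l"
  shows "card {x\<in>A. Q x = y} \<le> B_l l d D"
proof -
  have sub: "{x\<in>A. Q x = y} \<subseteq> dball l d D y"
  proof
    fix x assume "x \<in> {x\<in>A. Q x = y}"
    hence xb: "x \<in> blocks l" and qx: "Q x = y" using A by blast+
    have "d x (Q x) \<le> real l * D" using dQ xb by blast
    hence "d x y \<le> real l * D" using qx by simp
    thus "x \<in> dball l d D y" using xb unfolding dball_def by blast
  qed
  have fin: "finite (dball l d D y)"
    by (rule finite_subset[OF _ finite_blocks]) (unfold dball_def, blast)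
  have "card {x\<in>A. Q x = y} \<le> card (dball l d D y)"
    by (rule card_mono[OF fin sub])
  also have "\<dots> \<le> Max ((\<lambda>xh. card (dball l d D xh)) ` blocks l)"
    by (rule Max_ge[OF finite_imageI[OF finite_blocks] imageI[OF y]])
  finally show ?thesis unfolding B_l_def .
qed

lemma U_le:
  fixes d :: "'x::finite list \<Rightarrow> 'y::finite list \<Rightarrow> real"
  assumes dQ: "\<forall>x\<in>blocks l. d x (Q x) \<le> real l * D"
    and Qb: "\<forall>x\<in>blocks l. Q x \<in> blocks l"
    and gs: "\<forall>z<s. \<forall>a\<in>blocks l. g z a < s"
  shows "z < s \<Longrightarrow> Useq l Q f g n z \<le> real (B_l l d D) ^ n * Wsum l f g n z"
proof (induction n arbitrary: z)
  case 0
  have "(words l 0 :: 'y list list set) = {[]}" by (auto simp: words_def)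
  then show ?case by (simp add: Wsum_def)
next
  case (Suc n)
  let ?B = "real (B_l l d D)"
  let ?w = "\<lambda>z a. 2 powr - real (length (f z a))"
  have "Useq l Q f g (Suc n) z = (\<Sum>x\<in>blocks l. ?w z (Q x) * Useq l Q f g n (g z (Q x)))" by simp
  also have "\<dots> \<le> (\<Sum>x\<in>blocks l. (\<lambda>a. ?w z a * (?B ^ n * Wsum l f g n (g z a))) (Q x))"
    using Suc gs Qb by (intro sum_mono mult_left_mono) auto
  also have "\<dots> \<le> (\<Sum>a\<in>blocks l. real (B_l l d D) * (?w z a * (?B ^ n * Wsum l f g n (g z a))))"
  proof (rule fiber_sum_le[OF finite_blocks finite_blocks])
    show "Q ` blocks l \<subseteq> blocks l" using Qb by blast
  next
    fix y :: "'y list" assume "y \<in> blocks l"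
    show "card {x \<in> blocks l. Q x = y} \<le> B_l l d D"
      using fiber_card_B[of l d Q D y "blocks l"] dQ \<open>y \<in> blocks l\<close> by simp
  next
    fix y :: "'y list" assume "y \<in> blocks l"
    show "0 \<le> ?w z y * (?B ^ n * Wsum l f g n (g z y))"
      by (intro mult_nonneg_nonneg Wsum_nonneg) auto
  qed
  also have "\<dots> = ?B ^ Suc n * Wsum l f g (Suc n) z"
    unfolding Wsum_Suc sum_distrib_left by (intro sum.cong refl) (simp add: algebra_simps)
  finally show ?case .
qed

lemma T_norm:
  fixes v :: "complex vec"
  assumes Qb: "\<forall>x\<in>blocks l. Q x \<in> blocks l"
    and gs: "\<forall>z<s. \<forall>a\<in>blocks l. g z a < s"
    and M: "\<forall>j<s. norm (v $ j) \<le> M"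
  shows "z < s \<Longrightarrow> norm (Tseq l Q f g v n z) \<le> M * Useq l Q f g n z"
proof (induction n arbitrary: z)
  case 0 then show ?case using M by simp
next
  case (Suc n)
  have "norm (Tseq l Q f g v (Suc n) z) \<le> (\<Sum>x\<in>blocks l. norm (complex_of_real (2 powr - real (length (f z (Q x)))) * Tseq l Q f g v n (g z (Q x))))"
    by (simp only: Tseq.simps) (rule norm_sum)
  also have "\<dots> \<le> (\<Sum>x\<in>blocks l. 2 powr - real (length (f z (Q x))) * (M * Useq l Q f g n (g z (Q x))))"
    using Suc gs Qb by (intro sum_mono) (auto simp: norm_mult intro!: mult_left_mono)
  also have "\<dots> = M * Useq l Q f g (Suc n) z"
    by (simp add: sum_distrib_left algebra_simps)
  finally show ?case .
qed

lemma T_eq: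
  fixes Q :: "'x::finite list \<Rightarrow> 'y::finite list"
  assumes Qb: "\<forall>x\<in>blocks l. Q x \<in> blocks l"
    and gs: "\<forall>z<s. \<forall>a\<in>blocks l. g z a < s"
    and v: "v \<in> carrier_vec s"
    and ev: "K_matrix s l Q f g *\<^sub>v v = e \<cdot>\<^sub>v v"
  shows "z < s \<Longrightarrow> Tseq l Q f g v n z = e ^ n * v $ z"
proof (induction n arbitrary: z)
  case 0 then show ?case by simp
next
  case (Suc n)
  let ?w = "\<lambda>z a. complex_of_real (2 powr - real (length (f z a)))"
  have Kv: "(K_matrix s l Q f g *\<^sub>v v) $ z = (\<Sum>x\<in>blocks l. ?w z (Q x) * v $ (g z (Q x)))"
  proof -
    have "(K_matrix s l Q f g *\<^sub>v v) $ z = (\<Sum>j\<in>{0..<s}. complex_of_real (Kmat_entry l Q f g z j) * v $ j)"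
      using Suc.prems v by (simp add: K_matrix_def scalar_prod_def)
    also have "\<dots> = (\<Sum>j\<in>{0..<s}. \<Sum>x\<in>{x\<in>blocks l. g z (Q x) = j}. ?w z (Q x) * v $ (g z (Q x)))"
      unfolding Kmat_entry_def of_real_sum sum_distrib_right
      by (intro sum.cong refl) auto
    also have "\<dots> = (\<Sum>x\<in>blocks l. ?w z (Q x) * v $ (g z (Q x)))"
      by (rule sum.group[OF finite_blocks]) (use Suc.prems gs Qb in auto)
    finally show ?thesis .
  qed
  have "Tseq l Q f g v (Suc n) z = (\<Sum>x\<in>blocks l. ?w z (Q x) * (e ^ n * v $ (g z (Q x))))"
    using Suc gs Qb by (auto intro!: sum.cong)
  also have "\<dots> = e ^ n * (K_matrix s l Q f g *\<^sub>v v) $ z"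
    unfolding Kv sum_distrib_left by (intro sum.cong refl) (simp add: algebra_simps)
  also have "\<dots> = e ^ Suc n * v $ z"
    using ev Suc.prems v by simp
  finally show ?case .
qed


lemma ev_bound:
  fixes q B :: real and s c :: nat
  assumes q: "q \<ge> 0" and B: "B \<ge> 0"
    and h: "\<And>n. q ^ n \<le> B ^ n * (real s * (real c * real n + 1))"
  shows "q \<le> B"
proof (rule ccontr)
  assume "\<not> q \<le> B"
  hence qB: "q > B" by simp
  show False
  proof (cases "B = 0")
    case True
    from h[of 1] True qB show False by simp
  next
    case False
    hence Bp: "B > 0" using B by simp
    define r where "r = q / B"
    have r: "r > 1" using qB Bp by (simp add: r_def)
    obtain n where n: "real s * real c * real n + real s < r ^ n"
      using growth_contra[OF r, of "real s * real c" "real s"] by auto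
    have "r ^ n * B ^ n = q ^ n" using Bp by (simp add: r_def power_divide)
    also have "\<dots> \<le> B ^ n * (real s * (real c * real n + 1))" by (rule h)
    finally have "r ^ n \<le> real s * (real c * real n + 1)"
      using Bp by (simp add: mult.commute)
    with n show False by (simp add: algebra_simps)
  qed
qed

theorem mainTheorem9:
  fixes l s :: nat and D :: real
    and d :: "'x::finite list \<Rightarrow> 'y::finite list \<Rightarrow> real"
    and Q :: "'x list \<Rightarrow> 'y list"
    and f :: "nat \<Rightarrow> 'y list \<Rightarrow> bool list"
    and g :: "nat \<Rightarrow> 'y list \<Rightarrow> nat"
  assumes "l \<ge> 1" and "D \<ge> 0"
    and "\<forall>x y. d x y \<ge> 0"
    and "\<forall>x\<in>blocks l. Q x \<in> blocks l"
    and "\<forall>x\<in>blocks l. d x (Q x) \<le> real l * D"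
    and "fs_encoder s (blocks l) f g"
    and "IL s (blocks l) f g"
  shows "(\<forall>z<s. \<forall>z'<s. Kmat_entry l Q f g z z' \<le> real (B_l l d D) * Khat_entry l f g z z')
         \<and> spectral_radius (K_matrix s l Q f g) \<le> real (B_l l d D)"
proof
  note Qb = assms(4) and dQ = assms(5) and enc = assms(6) and il = assms(7)
  have gs: "\<forall>z<s. \<forall>a\<in>blocks l. g z a < s" and spos: "s > 0"
    using enc by (auto simp: fs_encoder_def)
  let ?B = "B_l l d D"
  show "\<forall>z<s. \<forall>z'<s. Kmat_entry l Q f g z z' \<le> real ?B * Khat_entry l f g z z'"
  proof (intro allI impI)
    fix z z' assume "z < s" "z' < s"
    let ?A = "{x\<in>blocks l. g z (Q x) = z'}"
    let ?C = "{xh\<in>blocks l. g z xh = z'}"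
    have "Kmat_entry l Q f g z z' = (\<Sum>x\<in>?A. (\<lambda>xh. 2 powr - real (length (f z xh))) (Q x))"
      unfolding Kmat_entry_def by simp
    also have "\<dots> \<le> (\<Sum>xh\<in>?C. real ?B * 2 powr - real (length (f z xh)))"
    proof (rule fiber_sum_le)
      show "finite ?A" by (rule finite_subset[OF _ finite_blocks]) blast
      show "finite ?C" by (rule finite_subset[OF _ finite_blocks]) blast
      show "Q ` ?A \<subseteq> ?C" using Qb by auto
    next
      fix y :: "'y list" assume "y \<in> ?C"
      hence y: "y \<in> blocks l" by simp
      show "card {x \<in> ?A. Q x = y} \<le> ?B"
        using fiber_card_B[of l d Q D y ?A] dQ y by blast
    qed simp
    also have "\<dots> = real ?B * Khat_entry l f g z z'"
      unfolding Khat_entry_def sum_distrib_left ..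
    finally show "Kmat_entry l Q f g z z' \<le> real ?B * Khat_entry l f g z z'" .
  qed
  define K where "K = K_matrix s l Q f g"
  have Kc: "K \<in> carrier_mat s s" unfolding K_def K_matrix_def by simp
  define c where "c = Max ((\<lambda>(z, a). length (f z a)) ` ({..<s} \<times> blocks l))"
  have c: "\<forall>z<s. \<forall>a\<in>blocks l. length (f z a) \<le> c"
  proof (intro allI impI ballI)
    fix z and a :: "'y list" assume "z < s" "a \<in> blocks l"
    hence "(z, a) \<in> {..<s} \<times> blocks l" by simp
    hence "(\<lambda>(z, a). length (f z a)) (z, a) \<le> c" unfolding c_def
      by (intro Max_ge finite_imageI finite_cartesian_product finite_blocks imageI) auto
    thus "length (f z a) \<le> c" by simp
  qed
  have "\<forall>e\<in>spectrum K. norm e \<le> real ?B"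
  proof
    fix e assume "e \<in> spectrum K"
    then obtain v where v: "v \<in> carrier_vec s" "v \<noteq> 0\<^sub>v s" and ev: "K *\<^sub>v v = e \<cdot>\<^sub>v v"
      using Kc unfolding spectrum_def eigenvalue_def eigenvector_def by auto
    define M where "M = Max ((\<lambda>j. norm (v $ j)) ` {..<s})"
    have finM: "finite ((\<lambda>j. norm (v $ j)) ` {..<s})" by simp
    have Mge: "\<forall>j<s. norm (v $ j) \<le> M" unfolding M_def using finM by (intro allI impI Max_ge) auto
    have "M \<in> (\<lambda>j. norm (v $ j)) ` {..<s}" unfolding M_def
      by (rule Max_in[OF finM]) (use spos in auto)
    then obtain i where i: "i < s" "norm (v $ i) = M" by auto
    obtain j where j: "j < s" "v $ j \<noteq> 0"
    proof (rule ccontr)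
      assume "\<not> thesis"
      hence "\<forall>j<s. v $ j = 0" using that by blast
      hence "v = 0\<^sub>v s" using v(1) by (intro eq_vecI) auto
      with v(2) show False by simp
    qed
    have "norm (v $ j) > 0" using j(2) by simp
    hence Mpos: "M > 0" using Mge j(1) by (meson order_less_le_trans)
    have "\<And>n. norm e ^ n \<le> real ?B ^ n * (real s * (real c * real n + 1))"
    proof -
      fix n
      have "norm e ^ n * M = norm (Tseq l Q f g v n i)"
        using T_eq[OF Qb gs v(1) ev[unfolded K_def] i(1)] i(2) by (simp add: norm_mult norm_power)
      also have "\<dots> \<le> M * Useq l Q f g n i" by (rule T_norm[OF Qb gs Mge i(1)])
      also have "\<dots> \<le> M * (real ?B ^ n * Wsum l f g n i)"
      proof -
        have "Useq l Q f g n i \<le> real ?B ^ n * Wsum l f g n i"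
          using U_le[of l d Q D s g i f n] dQ Qb gs i(1) by blast
        thus ?thesis using Mpos by (rule mult_left_mono[OF _ less_imp_le])
      qed
      also have "\<dots> \<le> M * (real ?B ^ n * (real s * (real c * real n + 1)))"
      proof -
        have "Wsum l f g n i \<le> real s * (real c * real n + 1)"
          by (rule kraft[OF enc il c i(1)])
        hence "real ?B ^ n * Wsum l f g n i \<le> real ?B ^ n * (real s * (real c * real n + 1))"
          by (rule mult_left_mono) simp
        thus ?thesis using Mpos by (rule mult_left_mono[OF _ less_imp_le])
      qed
      finally have "M * norm e ^ n \<le> M * (real ?B ^ n * (real s * (real c * real n + 1)))"
        by (simp only: mult.commute)
      thus "norm e ^ n \<le> real ?B ^ n * (real s * (real c * real n + 1))"
        using Mpos by (rule mult_left_le_imp_le)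
    qed
    thus "norm e \<le> real ?B" by (rule ev_bound[OF norm_ge_zero of_nat_0_le_iff])
  qed
  moreover have "spectral_radius K \<in> norm ` spectrum K"
    by (rule spectral_radius_mem_max(1)[OF Kc spos])
  ultimately have "spectral_radius K \<le> real ?B" by (metis imageE)
  thus "spectral_radius (K_matrix s l Q f g) \<le> real ?B" unfolding K_def .
qed

end
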